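(* Let $G$ be a pseudo-Boolean formula and $\omega$ a substitution with $\mathrm{supp}(\omega)\subseteq\mathrm{var}(G)$. Let $\vec a$ be a list of variables with $\vec a\cap\mathrm{var}(G)=\emptyset$, let $\vec z$ be a list of $n$ variables disjoint from $\vec a$, and let $\mathcal{O}(\vec u,\vec v,\vec a)$, $\mathcal{S}(\vec u,\vec v,\vec a)$ be formulas such that $\mathcal{S}$ is a specification over $\vec a$ and the relation $\preceq$ defined by $\mathcal{O}$ and $\mathcal{S}$ is a preorder. Then: 1. If $G\cup\mathcal{S}(\vec z{\upharpoonright}_\omega,\vec z,\vec a)\vdash\mathcal{O}(\vec z{\upharpoonright}_\omega,\vec z,\vec a)$, then for each assignment $\alpha$ satisfying $G$, $\alpha\circ\omega\preceq\alpha$ holds. 2. If $G\cup\mathcal{S}(\vec z,\vec z{\upharpoonright}_\omega,\vec a)\cup\mathcal{O}(\vec z,\vec z{\upharpoonright}_\omega,\vec a)\vdash\bot$, then for each assignment $\alpha$ satisfying $G$, $\alpha\not\preceq\alpha\circ\omega$ holds.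
   Context: A literal is $x$ or $\bar x=1-x$; a PB constraint is $\sum_i a_i\ell_i\ge A$; a formula is a set of PB constraints; $\bot$ is $0\ge1$; $\mathrm{var}(G)$ is the set of variables of $G$. A substitution $\omega$ maps variables to $0,1$ or literals, extended by $\omega(\bar x)=\overline{\omega(x)}$; $\mathrm{supp}(\omega)=\{x:\omega(x)\ne x\}$; $\vec z{\upharpoonright}_\omega=\omega(z_1),\dots,\omega(z_n)$; $(\alpha\circ\omega)(x)=\alpha(\omega(x))$. For a formula $F(\vec u,\vec v,\vec a)$, $F(\vec w,\vec w',\vec a)$ denotes substitution of $\vec w,\vec w'$ for $\vec u,\vec v$. $\vdash$ denotes cutting planes derivability (sound). Assignments are total on the non-auxiliary variables under consideration (including $\vec z$ and $\mathrm{var}(G)$) and need not assign $\vec a$. A formula $\mathcal{S}(\vec x,\vec a)=\{C_1,\dots,C_m\}$ is a specification over $\vec a$ if there are substitutions $\omega_i$ with $\mathrm{supp}(\omega_i)\subseteq\vec a$ such that $\{C_1,\dots,C_{i-1},\neg C_i\}\vdash\{C_1{\upharpoonright}_{\omega_i},\dots,C_i{\upharpoonright}_{\omega_i}\}$ for each $i$, where $\neg(\sum a_i\ell_i\ge A)$ is $\sum a_i\bar\ell_i\ge\sum a_i-A+1$. The relation $\preceq$ defined by $\mathcal{O},\mathcal{S}$ on assignments $\alpha,\beta$: $\alpha\preceq\beta$ iff there is an assignment $\rho$ to $\vec a$ such that $\mathcal{S}(\vec z{\upharpoonright}_\alpha,\vec z{\upharpoonright}_\beta,\vec a{\upharpoonright}_\rho)\wedge\mathcal{O}(\vec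 z{\upharpoonright}_\alpha,\vec z{\upharpoonright}_\beta,\vec a{\upharpoonright}_\rho)$ is true. *)

theory Defs
  imports Main
begin

datatype 'v lit = Pos 'v | Neg 'v

text \<open>Values a substitution may assign to a variable: a constant 0/1 or a literal.\<close>
datatype 'v sval = Cst bool | Lt "'v lit"

text \<open>A PB constraint  sum_i a_i l_i >= A  is a list of (coefficient, literal) pairs and a bound.\<close>
type_synonym 'v pbc = "(int \<times> 'v lit) list \<times> int"
type_synonym 'v formula = "'v pbc set"
type_synonym 'v subst = "'v \<Rightarrow> 'v sval"
type_synonym 'v assignment = "'v \<Rightarrow> bool"

fun lit_var :: "'v lit \<Rightarrow> 'v" where
  "lit_var (Pos x) = x" | "lit_var (Neg x) = x"

fun neg_lit :: "'v lit \<Rightarrow> 'v lit" where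
  "neg_lit (Pos x) = Neg x" | "neg_lit (Neg x) = Pos x"

fun lit_val :: "'v assignment \<Rightarrow> 'v lit \<Rightarrow> bool" where
  "lit_val \<alpha> (Pos x) = \<alpha> x" | "lit_val \<alpha> (Neg x) = (\<not> \<alpha> x)"

definition sat_pbc :: "'v assignment \<Rightarrow> 'v pbc \<Rightarrow> bool" where
  "sat_pbc \<alpha> C = ((\<Sum>(c, l) \<leftarrow> fst C. c * of_bool (lit_val \<alpha> l)) \<ge> snd C)"

definition sat :: "'v assignment \<Rightarrow> 'v formula \<Rightarrow> bool" where
  "sat \<alpha> F = (\<forall>C\<in>F. sat_pbc \<alpha> C)"

definition vars_pbc :: "'v pbc \<Rightarrow> 'v set" where
  "vars_pbc C = lit_var ` snd ` set (fst C)"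

definition vars :: "'v formula \<Rightarrow> 'v set" where
  "vars F = (\<Union>C\<in>F. vars_pbc C)"

definition bot_pbc :: "'v pbc" where
  "bot_pbc = ([], 1)"

definition neg_pbc :: "'v pbc \<Rightarrow> 'v pbc" where
  "neg_pbc C = (map (\<lambda>(c, l). (c, neg_lit l)) (fst C),
                (\<Sum>(c, l) \<leftarrow> fst C. c) - snd C + 1)"

fun neg_sval :: "'v sval \<Rightarrow> 'v sval" where
  "neg_sval (Cst b) = Cst (\<not> b)" | "neg_sval (Lt l) = Lt (neg_lit l)"

fun subst_lit :: "'v subst \<Rightarrow> 'v lit \<Rightarrow> 'v sval" where
  "subst_lit \<omega> (Pos x) = \<omega> x" | "subst_lit \<omega> (Neg x) = neg_sval (\<omega> x)"

text \<open>Applying a substitution to a constraint: literals mapped to constants are moved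
  into the bound.\<close>
definition subst_pbc :: "'v subst \<Rightarrow> 'v pbc \<Rightarrow> 'v pbc" where
  "subst_pbc \<omega> C =
     (concat (map (\<lambda>(c, l). case subst_lit \<omega> l of Lt l' \<Rightarrow> [(c, l')] | Cst _ \<Rightarrow> []) (fst C)),
      snd C - (\<Sum>(c, l) \<leftarrow> fst C. case subst_lit \<omega> l of Lt _ \<Rightarrow> 0 | Cst b \<Rightarrow> c * of_bool b))"

definition subst_formula :: "'v subst \<Rightarrow> 'v formula \<Rightarrow> 'v formula" where
  "subst_formula \<omega> F = subst_pbc \<omega> ` F"

definition supp :: "'v subst \<Rightarrow> 'v set" where
  "supp \<omega> = {x. \<omega> x \<noteq> Lt (Pos x)}"

definition sval_vars :: "'v sval \<Rightarrow> 'v set" where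
  "sval_vars s = (case s of Cst _ \<Rightarrow> {} | Lt l \<Rightarrow> {lit_var l})"

fun sval_val :: "'v assignment \<Rightarrow> 'v sval \<Rightarrow> bool" where
  "sval_val \<alpha> (Cst b) = b" | "sval_val \<alpha> (Lt l) = lit_val \<alpha> l"

definition comp_assign :: "'v assignment \<Rightarrow> 'v subst \<Rightarrow> 'v assignment" where
  "comp_assign \<alpha> \<omega> = (\<lambda>x. sval_val \<alpha> (\<omega> x))"

text \<open>z restricted by omega: omega(z_1),...,omega(z_n).\<close>
definition restr :: "'v list \<Rightarrow> 'v subst \<Rightarrow> 'v sval list" where
  "restr zs \<omega> = map \<omega> zs"

definition id_subst :: "'v subst" where
  "id_subst = (\<lambda>x. Lt (Pos x))"

definition assign_subst :: "'v assignment \<Rightarrow> 'v subst" where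
  "assign_subst \<alpha> = (\<lambda>x. Cst (\<alpha> x))"

text \<open>For a formula F(u, v, a): the (simultaneous) substitution of w for u and w' for v,
  identity elsewhere; F(w, w', a) is  subst_formula (inst u v w w') F.\<close>
definition inst :: "'v list \<Rightarrow> 'v list \<Rightarrow> 'v sval list \<Rightarrow> 'v sval list \<Rightarrow> 'v subst" where
  "inst u v w w' = (\<lambda>x. case map_of (zip u w) x of Some s \<Rightarrow> s
                        | None \<Rightarrow> (case map_of (zip v w') x of Some s \<Rightarrow> s | None \<Rightarrow> Lt (Pos x)))"

text \<open>Substitution of u, v and a simultaneously (used for F(w, w', a restricted by rho)).\<close>
definition inst3 :: "'v list \<Rightarrow> 'v list \<Rightarrow> 'v list \<Rightarrow> 'v sval list \<Rightarrow> 'v sval list \<Rightarrow> 'v sval list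
    \<Rightarrow> 'v subst" where
  "inst3 u v a w w' w'' = (\<lambda>x. case map_of (zip a w'') x of Some s \<Rightarrow> s
                              | None \<Rightarrow> inst u v w w' x)"

text \<open>Linear form of a constraint: coefficient of each variable (using neg x = 1 - x)
  and the constant part.\<close>
definition var_coeff :: "(int \<times> 'v lit) list \<Rightarrow> 'v \<Rightarrow> int" where
  "var_coeff ts x = (\<Sum>(c, l) \<leftarrow> ts. if l = Pos x then c else if l = Neg x then - c else 0)"

definition const_part :: "(int \<times> 'v lit) list \<Rightarrow> int" where
  "const_part ts = (\<Sum>(c, l) \<leftarrow> ts. case l of Neg _ \<Rightarrow> c | Pos _ \<Rightarrow> 0)"

inductive cp_derives :: "'v formula \<Rightarrow> 'v pbc \<Rightarrow> bool" (infix "\<turnstile>cp" 50) for F where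
  cp_axiom: "C \<in> F \<Longrightarrow> F \<turnstile>cp C"
| cp_lit_axiom: "F \<turnstile>cp ([(1, l)], 0)"
| cp_add: "F \<turnstile>cp (ts1, A1) \<Longrightarrow> F \<turnstile>cp (ts2, A2) \<Longrightarrow> F \<turnstile>cp (ts1 @ ts2, A1 + A2)"
| cp_mult: "k > 0 \<Longrightarrow> F \<turnstile>cp (ts, A) \<Longrightarrow> F \<turnstile>cp (map (\<lambda>(c, l). (k * c, l)) ts, k * A)"
| cp_div: "k > 0 \<Longrightarrow> (\<forall>(c, l) \<in> set ts. k dvd c) \<Longrightarrow> F \<turnstile>cp (ts, A)
            \<Longrightarrow> F \<turnstile>cp (map (\<lambda>(c, l). (c div k, l)) ts, (A + k - 1) div k)"
| cp_rewrite: "F \<turnstile>cp (ts, A) \<Longrightarrow> var_coeff ts' = var_coeff ts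
            \<Longrightarrow> A' - const_part ts' = A - const_part ts \<Longrightarrow> F \<turnstile>cp (ts', A')"

definition cp_derives_set :: "'v formula \<Rightarrow> 'v formula \<Rightarrow> bool" (infix "\<turnstile>" 50) where
  "F \<turnstile> G = (\<forall>C\<in>G. F \<turnstile>cp C)"

definition is_spec :: "'v list \<Rightarrow> 'v pbc list \<Rightarrow> bool" where
  "is_spec as S = (\<exists>\<omega>s :: 'v subst list. length \<omega>s = length S \<and>
     (\<forall>i < length S. supp (\<omega>s ! i) \<subseteq> set as \<and>
        (set (take i S) \<union> {neg_pbc (S ! i)}) \<turnstile> subst_formula (\<omega>s ! i) (set (take (Suc i) S))))"

text \<open>A formula is true if every assignment satisfies it (used for variable-free formulas).\<close>
definition true_formula :: "'v formula \<Rightarrow> bool" where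
  "true_formula F = (\<forall>\<gamma>. sat \<gamma> F)"

definition prec :: "'v formula \<Rightarrow> 'v pbc list \<Rightarrow> 'v list \<Rightarrow> 'v list \<Rightarrow> 'v list \<Rightarrow> 'v list
    \<Rightarrow> 'v assignment \<Rightarrow> 'v assignment \<Rightarrow> bool" where
  "prec Ob S u v as zs \<alpha> \<beta> = (\<exists>\<rho> :: 'v assignment.
     true_formula (subst_formula
        (inst3 u v as (restr zs (assign_subst \<alpha>)) (restr zs (assign_subst \<beta>))
               (restr as (assign_subst \<rho>))) (set S \<union> Ob)))"

definition preorder_rel :: "('a \<Rightarrow> 'a \<Rightarrow> bool) \<Rightarrow> bool" where
  "preorder_rel R = ((\<forall>x. R x x) \<and> (\<forall>x y z. R x y \<longrightarrow> R y z \<longrightarrow> R x z))"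

end

theory Submission
  imports Defs
begin



definition val :: "'v assignment \<Rightarrow> (int \<times> 'v lit) list \<Rightarrow> int" where
  "val \<alpha> ts = (\<Sum>(c, l) \<leftarrow> ts. c * of_bool (lit_val \<alpha> l))"

lemma val_simps[simp]: "val \<alpha> [] = 0" "val \<alpha> ((c,l)#ts) = c * of_bool (lit_val \<alpha> l) + val \<alpha> ts"
  "val \<alpha> (ts1 @ ts2) = val \<alpha> ts1 + val \<alpha> ts2"
  by (auto simp: val_def)

lemma sat_pbc_val: "sat_pbc \<alpha> C = (val \<alpha> (fst C) \<ge> snd C)"
  by (simp add: sat_pbc_def val_def)

lemma val_mult: "val \<alpha> (map (\<lambda>(c, l). (k * c, l)) ts) = k * val \<alpha> ts"
  by (induction ts) (auto simp: algebra_simps)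

lemma val_div: "(\<forall>(c, l) \<in> set ts. k dvd c) \<Longrightarrow> k * val \<alpha> (map (\<lambda>(c, l). (c div k, l)) ts) = val \<alpha> ts"
  by (induction ts) (auto simp: algebra_simps)

lemma val_lin: "finite V \<Longrightarrow> lit_var ` snd ` set ts \<subseteq> V \<Longrightarrow>
   val \<alpha> ts = const_part ts + (\<Sum>x\<in>V. var_coeff ts x * of_bool (\<alpha> x))"
proof (induction ts)
  case Nil
  then show ?case by (simp add: const_part_def var_coeff_def)
next
  case (Cons t ts)
  obtain c l where t: "t = (c, l)" by force
  have vc: "var_coeff (t#ts) x = (if l = Pos x then c else if l = Neg x then - c else 0) + var_coeff ts x" for x
    by (simp add: var_coeff_def t)
  have cp: "const_part (t#ts) = (case l of Neg _ \<Rightarrow> c | Pos _ \<Rightarrow> 0) + const_part ts"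
    by (simp add: const_part_def t)
  have lv: "lit_var l \<in> V" using Cons.prems t by auto
  have "(\<Sum>x\<in>V. var_coeff (t#ts) x * of_bool (\<alpha> x)) =
        (\<Sum>x\<in>V. (if l = Pos x then c else if l = Neg x then - c else 0) * of_bool (\<alpha> x))
        + (\<Sum>x\<in>V. var_coeff ts x * of_bool (\<alpha> x))"
    by (simp add: vc distrib_right sum.distrib)
  moreover have "(\<Sum>x\<in>V. (if l = Pos x then c else if l = Neg x then - c else 0) * of_bool (\<alpha> x))
     = (if l = Pos (lit_var l) then c else - c) * of_bool (\<alpha> (lit_var l))"
  proof -
    have "(\<Sum>x\<in>V. (if l = Pos x then c else if l = Neg x then - c else 0) * of_bool (\<alpha> x))
      = (\<Sum>x\<in>V. if x = lit_var l then (if l = Pos (lit_var l) then c else - c) * of_bool (\<alpha> (lit_var l)) else 0)"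
      by (rule sum.cong) (cases l; auto)+
    also have "\<dots> = (if l = Pos (lit_var l) then c else - c) * of_bool (\<alpha> (lit_var l))"
      using Cons.prems(1) lv by simp
    finally show ?thesis .
  qed
  ultimately show ?case using Cons t cp by (cases l) (auto simp: algebra_simps)
qed

lemma sound_cp: "F \<turnstile>cp C \<Longrightarrow> sat \<alpha> F \<Longrightarrow> sat_pbc \<alpha> C"
proof (induction C rule: cp_derives.induct)
  case (cp_axiom C)
  then show ?case by (simp add: sat_def)
next
  case (cp_lit_axiom l)
  then show ?case by (simp add: sat_pbc_val)
next
  case (cp_add ts1 A1 ts2 A2)
  then show ?case by (simp add: sat_pbc_val)
next
  case (cp_mult k ts A)
  then show ?case by (simp add: sat_pbc_val val_mult)
next
  case (cp_div k ts A)
  then have h: "A \<le> val \<alpha> ts" by (simp add: sat_pbc_val)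
  have e: "k * val \<alpha> (map (\<lambda>(c, l). (c div k, l)) ts) = val \<alpha> ts" using val_div cp_div by blast
  define w where "w = val \<alpha> (map (\<lambda>(c, l). (c div k, l)) ts)"
  have kw: "A + k - 1 \<le> k * w + (k - 1)" using h e w_def by simp
  have "(A + k - 1) div k \<le> (k * w + (k - 1)) div k"
    by (rule zdiv_mono1[OF kw]) (use cp_div(1) in simp)
  also have "(k * w + (k - 1)) div k = w"
    using cp_div(1) by (simp add: div_add1_eq[of "k*w"])
  finally show ?case unfolding sat_pbc_val w_def by simp
next
  case (cp_rewrite ts A ts' A')
  define V where "V = lit_var ` snd ` set ts \<union> lit_var ` snd ` set ts'"
  have f: "finite V" by (simp add: V_def)
  have "val \<alpha> ts' = const_part ts' + (\<Sum>x\<in>V. var_coeff ts' x * of_bool (\<alpha> x))"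
    by (rule val_lin[OF f]) (auto simp: V_def)
  moreover have "val \<alpha> ts = const_part ts + (\<Sum>x\<in>V. var_coeff ts x * of_bool (\<alpha> x))"
    by (rule val_lin[OF f]) (auto simp: V_def)
  ultimately have "val \<alpha> ts' = const_part ts' - const_part ts + val \<alpha> ts"
    using cp_rewrite(2) by simp
  moreover have "A \<le> val \<alpha> ts" using cp_rewrite.IH cp_rewrite.prems by (simp add: sat_pbc_val)
  ultimately show ?case using cp_rewrite(3) by (simp add: sat_pbc_val)
qed

lemma sound: "F \<turnstile> G \<Longrightarrow> sat \<alpha> F \<Longrightarrow> sat \<alpha> G"
  using sound_cp unfolding cp_derives_set_def sat_def by blast


lemma lit_val_neg[simp]: "lit_val \<alpha> (neg_lit l) = (\<not> lit_val \<alpha> l)"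
  by (cases l) auto

lemma sval_val_neg[simp]: "sval_val \<alpha> (neg_sval s) = (\<not> sval_val \<alpha> s)"
  by (cases s) auto

lemma sval_subst_lit: "sval_val \<gamma> (subst_lit \<sigma> l) = lit_val (comp_assign \<gamma> \<sigma>) l"
  by (cases l) (auto simp: comp_assign_def)

lemma subst_sum_aux:
  "val \<gamma> (concat (map (\<lambda>(c, l). case subst_lit \<sigma> l of Lt l' \<Rightarrow> [(c, l')] | Cst _ \<Rightarrow> []) ts))
   + (\<Sum>(c, l) \<leftarrow> ts. case subst_lit \<sigma> l of Lt _ \<Rightarrow> 0 | Cst b \<Rightarrow> c * of_bool b)
   = val (comp_assign \<gamma> \<sigma>) ts"
proof (induction ts)
  case Nil
  then show ?case by simp
next
  case (Cons t ts)
  obtain c l where t: "t = (c, l)" by force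
  have "lit_val (comp_assign \<gamma> \<sigma>) l = sval_val \<gamma> (subst_lit \<sigma> l)" by (simp add: sval_subst_lit)
  then show ?case using Cons t by (cases "subst_lit \<sigma> l") auto
qed

lemma sat_pbc_subst: "sat_pbc \<gamma> (subst_pbc \<sigma> C) = sat_pbc (comp_assign \<gamma> \<sigma>) C"
  using subst_sum_aux[of \<gamma> \<sigma> "fst C"]
  unfolding sat_pbc_val subst_pbc_def by (simp add: algebra_simps)

lemma sat_subst: "sat \<gamma> (subst_formula \<sigma> F) = sat (comp_assign \<gamma> \<sigma>) F"
  by (simp add: sat_def subst_formula_def sat_pbc_subst)

lemma lit_val_cong: "\<alpha> (lit_var l) = \<beta> (lit_var l) \<Longrightarrow> lit_val \<alpha> l = lit_val \<beta> l"
  by (cases l) auto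

lemma sat_pbc_cong: "(\<forall>x\<in>vars_pbc C. \<alpha> x = \<beta> x) \<Longrightarrow> sat_pbc \<alpha> C = sat_pbc \<beta> C"
proof -
  assume a: "\<forall>x\<in>vars_pbc C. \<alpha> x = \<beta> x"
  have me: "map (\<lambda>(c, l). c * of_bool (lit_val \<alpha> l)) (fst C) = map (\<lambda>(c, l). c * of_bool (lit_val \<beta> l)) (fst C)"
  proof (rule map_cong[OF refl])
    fix t assume t: "t \<in> set (fst C)"
    obtain c l where tt: "t = (c, l)" by force
    have "lit_var l \<in> vars_pbc C" using t tt unfolding vars_pbc_def by force
    then have "lit_val \<alpha> l = lit_val \<beta> l" using a lit_val_cong by blast
    then show "(\<lambda>(c, l). c * of_bool (lit_val \<alpha> l)) t = (\<lambda>(c, l). c * of_bool (lit_val \<beta> l)) t"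
      by (simp add: tt)
  qed
  show ?thesis unfolding sat_pbc_def by (simp only: me)
qed

lemma sat_cong: "(\<forall>x\<in>vars F. \<alpha> x = \<beta> x) \<Longrightarrow> sat \<alpha> F = sat \<beta> F"
  unfolding sat_def vars_def using sat_pbc_cong by (metis UN_I)

lemma sat_neg: "\<not> sat_pbc \<alpha> C \<Longrightarrow> sat_pbc \<alpha> (neg_pbc C)"
proof -
  assume a: "\<not> sat_pbc \<alpha> C"
  have e: "val \<alpha> (map (\<lambda>(c, l). (c, neg_lit l)) ts) = (\<Sum>(c, l) \<leftarrow> ts. c) - val \<alpha> ts" for ts
    by (induction ts) (auto simp: algebra_simps)
  show ?thesis using a unfolding sat_pbc_val neg_pbc_def by (simp add: e)
qed

lemma sat_union: "sat \<alpha> (F \<union> G) = (sat \<alpha> F \<and> sat \<alpha> G)"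
  by (auto simp: sat_def)

lemma vars_union: "vars (F \<union> G) = vars F \<union> vars G"
  by (auto simp: vars_def)

lemma spec_sat:
  assumes "is_spec as S"
  shows "\<exists>\<delta>. (\<forall>x. x \<notin> set as \<longrightarrow> \<delta> x = \<delta>0 x) \<and> sat \<delta> (set S)"
proof -
  obtain \<omega>s :: "'a subst list" where len: "length \<omega>s = length S" and
    H: "\<forall>i < length S. supp (\<omega>s ! i) \<subseteq> set as \<and>
        (set (take i S) \<union> {neg_pbc (S ! i)}) \<turnstile> subst_formula (\<omega>s ! i) (set (take (Suc i) S))"
    using assms unfolding is_spec_def by blast
  have "i \<le> length S \<Longrightarrow> \<exists>\<delta>. (\<forall>x. x \<notin> set as \<longrightarrow> \<delta> x = \<delta>0 x) \<and> sat \<delta> (set (take i S))" for i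
  proof (induction i)
    case 0
    then show ?case by (auto simp: sat_def)
  next
    case (Suc i)
    then obtain \<delta> where d1: "\<forall>x. x \<notin> set as \<longrightarrow> \<delta> x = \<delta>0 x" and d2: "sat \<delta> (set (take i S))"
      by auto
    have il: "i < length S" using Suc by simp
    have tk: "set (take (Suc i) S) = set (take i S) \<union> {S ! i}"
      using il by (simp add: take_Suc_conv_app_nth)
    show ?case
    proof (cases "sat_pbc \<delta> (S ! i)")
      case True
      then show ?thesis using d1 d2 tk by (auto simp: sat_def)
    next
      case False
      then have "sat \<delta> (set (take i S) \<union> {neg_pbc (S ! i)})"
        using d2 sat_neg[OF False] by (auto simp: sat_def)
      then have "sat \<delta> (subst_formula (\<omega>s ! i) (set (take (Suc i) S)))"
        using H il sound by blast
      then have s: "sat (comp_assign \<delta> (\<omega>s ! i)) (set (take (Suc i) S))" by (simp add: sat_subst)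
      have "\<forall>x. x \<notin> set as \<longrightarrow> comp_assign \<delta> (\<omega>s ! i) x = \<delta>0 x"
      proof (intro allI impI)
        fix x assume "x \<notin> set as"
        then have "x \<notin> supp (\<omega>s ! i)" using H il by blast
        then have "(\<omega>s ! i) x = Lt (Pos x)" by (simp add: supp_def)
        then show "comp_assign \<delta> (\<omega>s ! i) x = \<delta>0 x" using d1 \<open>x \<notin> set as\<close> by (simp add: comp_assign_def)
      qed
      then show ?thesis using s by blast
    qed
  qed
  from this[of "length S"] show ?thesis by simp
qed

lemma map_of_zip_map_right:
  "length xs = length ys \<Longrightarrow> map_of (zip xs (map f ys)) x = map_option f (map_of (zip xs ys) x)"
proof (induction xs arbitrary: ys)
  case Nil
  then show ?case by simp
next
  case (Cons a xs)
  then show ?case by (cases ys) auto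
qed

lemma map_of_zip_notin: "x \<notin> set xs \<Longrightarrow> map_of (zip xs ys) x = None"
proof (induction xs arbitrary: ys)
  case Nil
  then show ?case by simp
next
  case (Cons a xs)
  then show ?case by (cases ys) auto
qed

lemma inst_as:
  "x \<in> set as \<Longrightarrow> set u \<inter> set as = {} \<Longrightarrow> set v \<inter> set as = {} \<Longrightarrow> inst u v p q x = Lt (Pos x)"
  unfolding inst_def
  by (subst map_of_zip_notin, blast)+ simp

lemma inst_range: "inst u v p q x \<in> set p \<union> set q \<union> {Lt (Pos x)}"
  unfolding inst_def
  by (auto split: option.split dest!: map_of_SomeD set_zip_rightD)

lemma sval_val_cong: "(\<forall>y\<in>sval_vars s. \<alpha> y = \<beta> y) \<Longrightarrow> sval_val \<alpha> s = sval_val \<beta> s"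
proof (cases s)
  case (Cst b)
  then show ?thesis by simp
next
  case (Lt l)
  assume "\<forall>y\<in>sval_vars s. \<alpha> y = \<beta> y"
  then have "\<alpha> (lit_var l) = \<beta> (lit_var l)" using Lt by (simp add: sval_vars_def)
  then show ?thesis using Lt lit_val_cong by simp
qed

lemma inst3_eval:
  assumes lp: "length p = length u" and lq: "length q = length v"
    and ua: "set u \<inter> set as = {}" and va: "set v \<inter> set as = {}"
    and x: "x \<in> set u \<union> set v \<union> set as"
  shows "comp_assign \<gamma> (inst3 u v as (map (\<lambda>s. Cst (sval_val \<beta> s)) p) (map (\<lambda>s. Cst (sval_val \<beta> s)) q)
            (restr as (assign_subst \<beta>))) x = comp_assign \<beta> (inst u v p q) x"
proof (cases "x \<in> set as")
  case True
  have "inst u v p q x = Lt (Pos x)" using inst_as[OF True ua va] .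
  moreover have "map_of (zip as (restr as (assign_subst \<beta>))) x = Some (Cst (\<beta> x))"
    using True by (simp add: restr_def assign_subst_def map_of_zip_map)
  ultimately show ?thesis by (simp add: comp_assign_def inst3_def)
next
  case False
  have a: "map_of (zip as (restr as (assign_subst \<beta>))) x = None"
    using False by (simp add: restr_def assign_subst_def map_of_zip_map)
  have xuv: "x \<in> set u \<or> x \<in> set v" using x False by blast
  show ?thesis
  proof (cases "map_of (zip u p) x")
    case (Some s)
    then show ?thesis using a lp lq
      by (simp add: comp_assign_def inst3_def inst_def map_of_zip_map_right)
  next
    case None
    then have "x \<notin> set u" using lp by (metis map_of_zip_is_None)
    then have xv: "x \<in> set v" using xuv by blast
    then obtain s where s: "map_of (zip v q) x = Some s" using lq
      by (metis map_of_zip_is_None option.exhaust)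
    have n: "map_of (zip u p) x = None" using None .
    have s': "map_of (zip v (map (\<lambda>s. Cst (sval_val \<beta> s)) q)) x = Some (Cst (sval_val \<beta> s))"
      using s lq by (simp add: map_of_zip_map_right)
    have n': "map_of (zip u (map (\<lambda>s. Cst (sval_val \<beta> s)) p)) x = None"
      using n lp by (simp add: map_of_zip_map_right)
    show ?thesis
      by (simp add: comp_assign_def inst3_def inst_def a n n' s s')
  qed
qed

lemma true_iff:
  assumes lp: "length p = length u" and lq: "length q = length v"
    and ua: "set u \<inter> set as = {}" and va: "set v \<inter> set as = {}"
    and vF: "vars F \<subseteq> set u \<union> set v \<union> set as"
  shows "true_formula (subst_formula (inst3 u v as (map (\<lambda>s. Cst (sval_val \<beta> s)) p)
            (map (\<lambda>s. Cst (sval_val \<beta> s)) q) (restr as (assign_subst \<beta>))) F)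
         = sat (comp_assign \<beta> (inst u v p q)) F"
proof -
  have "sat (comp_assign \<gamma> (inst3 u v as (map (\<lambda>s. Cst (sval_val \<beta> s)) p)
            (map (\<lambda>s. Cst (sval_val \<beta> s)) q) (restr as (assign_subst \<beta>)))) F
        = sat (comp_assign \<beta> (inst u v p q)) F" for \<gamma>
    by (rule sat_cong) (use vF inst3_eval[OF lp lq ua va] in blast)
  then show ?thesis unfolding true_formula_def sat_subst by blast
qed

theorem lemma3:
  fixes G Ob :: "'v formula" and S :: "'v pbc list" and \<omega> :: "'v subst"
    and as zs u v :: "'v list"
  assumes supp_G: "supp \<omega> \<subseteq> vars G"
    and as_G: "set as \<inter> vars G = {}"
    and zs_as: "set zs \<inter> set as = {}"
    and \<omega>_zs: "\<forall>x\<in>set zs. sval_vars (\<omega> x) \<inter> set as = {}"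
    and u_len: "length u = length zs" and v_len: "length v = length zs"
    and u_dist: "distinct u" and v_dist: "distinct v"
    and uv: "set u \<inter> set v = {}" and ua: "set u \<inter> set as = {}" and va: "set v \<inter> set as = {}"
    and vars_O: "vars Ob \<subseteq> set u \<union> set v \<union> set as"
    and vars_S: "vars (set S) \<subseteq> set u \<union> set v \<union> set as"
    and spec: "is_spec as S"
    and pre: "preorder_rel (prec Ob S u v as zs)"
  shows
    "(G \<union> subst_formula (inst u v (restr zs \<omega>) (restr zs id_subst)) (set S)
        \<turnstile> subst_formula (inst u v (restr zs \<omega>) (restr zs id_subst)) Ob
      \<longrightarrow> (\<forall>\<alpha>. sat \<alpha> G \<longrightarrow> prec Ob S u v as zs (comp_assign \<alpha> \<omega>) \<alpha>))
   \<and> (G \<union> subst_formula (inst u v (restr zs id_subst) (restr zs \<omega>)) (set S)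
        \<union> subst_formula (inst u v (restr zs id_subst) (restr zs \<omega>)) Ob \<turnstile> {bot_pbc}
      \<longrightarrow> (\<forall>\<alpha>. sat \<alpha> G \<longrightarrow> \<not> prec Ob S u v as zs \<alpha> (comp_assign \<alpha> \<omega>)))"
proof -
  define F :: "'v assignment \<Rightarrow> 'v sval \<Rightarrow> 'v sval" where "F = (\<lambda>\<beta> s. Cst (sval_val \<beta> s))"
  define \<sigma>1 where "\<sigma>1 = inst u v (restr zs \<omega>) (restr zs id_subst)"
  define \<sigma>2 where "\<sigma>2 = inst u v (restr zs id_subst) (restr zs \<omega>)"
  have r1: "restr zs (assign_subst (comp_assign \<beta> \<omega>)) = map (F \<beta>) (restr zs \<omega>)" for \<beta>
    by (simp add: restr_def assign_subst_def comp_assign_def F_def)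
  have r2: "restr zs (assign_subst \<beta>) = map (F \<beta>) (restr zs id_subst)" for \<beta>
    by (simp add: restr_def assign_subst_def F_def id_subst_def)
  have c1: "restr zs (assign_subst (comp_assign \<alpha> \<omega>)) = restr zs (assign_subst (comp_assign \<beta> \<omega>))"
    if "\<forall>x. x \<notin> set as \<longrightarrow> \<alpha> x = \<beta> x" for \<alpha> \<beta>
  proof -
    have "sval_val \<alpha> (\<omega> z) = sval_val \<beta> (\<omega> z)" if "z \<in> set zs" for z
      by (rule sval_val_cong) (use that \<open>\<forall>x. x \<notin> set as \<longrightarrow> \<alpha> x = \<beta> x\<close> \<omega>_zs in blast)
    then show ?thesis by (simp add: restr_def assign_subst_def comp_assign_def)
  qed
  have c2: "restr zs (assign_subst \<alpha>) = restr zs (assign_subst \<beta>)"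
    if "\<forall>x. x \<notin> set as \<longrightarrow> \<alpha> x = \<beta> x" for \<alpha> \<beta>
    using that zs_as by (auto simp: restr_def assign_subst_def)
  have lens: "length (restr zs \<omega>) = length u" "length (restr zs id_subst) = length v"
    "length (restr zs id_subst) = length u" "length (restr zs \<omega>) = length v"
    using u_len v_len by (simp_all add: restr_def)
  have vSO: "vars (set S \<union> Ob) \<subseteq> set u \<union> set v \<union> set as"
    using vars_O vars_S by (simp add: vars_union)
  have satG: "sat \<beta> G" if "sat \<alpha> G" "\<forall>x. x \<notin> set as \<longrightarrow> \<alpha> x = \<beta> x" for \<alpha> \<beta>
  proof -
    have "\<forall>x\<in>vars G. \<alpha> x = \<beta> x" using that(2) as_G by blast
    then show ?thesis using that(1) sat_cong by blast
  qed
  have part1: "\<forall>\<alpha>. sat \<alpha> G \<longrightarrow> prec Ob S u v as zs (comp_assign \<alpha> \<omega>) \<alpha>"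
    if D: "G \<union> subst_formula \<sigma>1 (set S) \<turnstile> subst_formula \<sigma>1 Ob"
  proof (intro allI impI)
    fix \<alpha> assume aG: "sat \<alpha> G"
    obtain \<delta> where d1: "\<forall>x. x \<notin> set as \<longrightarrow> \<delta> x = comp_assign \<alpha> \<sigma>1 x" and d2: "sat \<delta> (set S)"
      using spec_sat[OF spec] by blast
    define \<beta> where "\<beta> = (\<lambda>x. if x \<in> set as then \<delta> x else \<alpha> x)"
    have ab: "\<forall>x. x \<notin> set as \<longrightarrow> \<alpha> x = \<beta> x" by (simp add: \<beta>_def)
    have cb: "comp_assign \<beta> \<sigma>1 = \<delta>"
    proof
      fix x
      show "comp_assign \<beta> \<sigma>1 x = \<delta> x"
      proof (cases "x \<in> set as")
        case True
        then show ?thesis using inst_as[OF True ua va] by (simp add: \<sigma>1_def comp_assign_def \<beta>_def)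
      next
        case False
        have "\<sigma>1 x \<in> set (restr zs \<omega>) \<union> set (restr zs id_subst) \<union> {Lt (Pos x)}"
          unfolding \<sigma>1_def by (rule inst_range)
        then have "sval_vars (\<sigma>1 x) \<inter> set as = {}"
        proof (elim UnE)
          assume "\<sigma>1 x \<in> set (restr zs \<omega>)"
          then obtain z where "z \<in> set zs" "\<sigma>1 x = \<omega> z" by (auto simp: restr_def)
          then show ?thesis using \<omega>_zs by simp
        next
          assume "\<sigma>1 x \<in> set (restr zs id_subst)"
          then obtain z where "z \<in> set zs" "\<sigma>1 x = Lt (Pos z)" by (auto simp: restr_def id_subst_def)
          then show ?thesis using zs_as by (auto simp: sval_vars_def)
        next
          assume "\<sigma>1 x \<in> {Lt (Pos x)}"
          then show ?thesis using False by (auto simp: sval_vars_def)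
        qed
        then have "sval_val \<beta> (\<sigma>1 x) = sval_val \<alpha> (\<sigma>1 x)"
          by (intro sval_val_cong) (auto simp: \<beta>_def)
        then show ?thesis using d1 False by (simp add: comp_assign_def)
      qed
    qed
    have bG: "sat \<beta> G" using satG[OF aG ab] .
    have bS: "sat \<beta> (subst_formula \<sigma>1 (set S))" using d2 cb by (simp add: sat_subst)
    have "sat \<beta> (subst_formula \<sigma>1 Ob)" using sound[OF D] bG bS by (simp add: sat_union)
    then have dO: "sat \<delta> Ob" using cb by (simp add: sat_subst)
    have "true_formula (subst_formula (inst3 u v as (map (F \<beta>) (restr zs \<omega>)) (map (F \<beta>) (restr zs id_subst))
            (restr as (assign_subst \<beta>))) (set S \<union> Ob))"
      unfolding F_def using true_iff[OF lens(1) lens(2) ua va vSO] cb d2 dO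
      by (simp add: \<sigma>1_def sat_union)
    then show "prec Ob S u v as zs (comp_assign \<alpha> \<omega>) \<alpha>"
      unfolding prec_def c1[OF ab] c2[OF ab] unfolding r1 unfolding r2 by blast
  qed
  have part2: "\<forall>\<alpha>. sat \<alpha> G \<longrightarrow> \<not> prec Ob S u v as zs \<alpha> (comp_assign \<alpha> \<omega>)"
    if D: "G \<union> subst_formula \<sigma>2 (set S) \<union> subst_formula \<sigma>2 Ob \<turnstile> {bot_pbc}"
  proof (intro allI impI notI)
    fix \<alpha> assume aG: "sat \<alpha> G" and P: "prec Ob S u v as zs \<alpha> (comp_assign \<alpha> \<omega>)"
    then obtain \<rho> where T: "true_formula (subst_formula (inst3 u v as (restr zs (assign_subst \<alpha>))
        (restr zs (assign_subst (comp_assign \<alpha> \<omega>))) (restr as (assign_subst \<rho>))) (set S \<union> Ob))"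
      unfolding prec_def by blast
    define \<beta> where "\<beta> = (\<lambda>x. if x \<in> set as then \<rho> x else \<alpha> x)"
    have ab: "\<forall>x. x \<notin> set as \<longrightarrow> \<alpha> x = \<beta> x" by (simp add: \<beta>_def)
    have rb: "restr as (assign_subst \<rho>) = restr as (assign_subst \<beta>)"
      by (simp add: restr_def assign_subst_def \<beta>_def)
    have "true_formula (subst_formula (inst3 u v as (map (F \<beta>) (restr zs id_subst)) (map (F \<beta>) (restr zs \<omega>))
            (restr as (assign_subst \<beta>))) (set S \<union> Ob))"
      using T unfolding c1[OF ab] c2[OF ab] rb unfolding r1 unfolding r2 .
    then have "sat (comp_assign \<beta> \<sigma>2) (set S \<union> Ob)"
      unfolding F_def \<sigma>2_def using true_iff[OF lens(3) lens(4) ua va vSO] by simp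
    then have "sat \<beta> (G \<union> subst_formula \<sigma>2 (set S) \<union> subst_formula \<sigma>2 Ob)"
      using satG[OF aG ab] by (simp add: sat_union sat_subst)
    then have "sat \<beta> {bot_pbc}" using sound[OF D] by blast
    then show False by (simp add: sat_def sat_pbc_def bot_pbc_def)
  qed
  show ?thesis using part1 part2 unfolding \<sigma>1_def \<sigma>2_def by blast
qed

end
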